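(* Consider two agents with combination matrix $A=\begin{bmatrix}a&1-a\\1-a&a\end{bmatrix}$, $a\in(0,1)$, $P=0.5I_2$, $\overline{A}=(I_2+A)/2$, $V=U\Sigma^{1/2}U^{\mathsf{T}}$ where $(P-AP)/2=U\Sigma U^{\mathsf{T}}$ is an eigendecomposition, and $\mathcal{V}=V\otimes I_M$. Each agent has quadratic cost $\frac12(w^{\mathsf{T}}R_{u,k}w-2r_{du,k}^{\mathsf{T}}w)$ with $R_{u,1}=R_{u,2}=\sigma^2I_M$, and both run EXTRA with step-size $\mu^e$, initialized with $\mathcal{Y}^e_0=\mathcal{V}\mathcal{W}^e_0$. The stacked error $\widetilde{z}^e_i=[\widetilde{\mathcal{W}}^e_i;\widetilde{\mathcal{Y}}^e_i]$ then evolves as $\widetilde{z}^e_i=(Q_e\otimes I_M)\widetilde{z}^e_{i-1}$ with $Q_e=\begin{bmatrix}\overline{A}-\mu^e\sigma^2I_2 & -2V\\ V(\overline{A}-\mu^e\sigma^2I_2) & \overline{A}\end{bmatrix}$. If $\mu^e$ is chosen such that $\mu^e\sigma^2\ge a+1$, then $\widetilde{z}^e_i$ generated by EXTRA diverges.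
   Context: Contrasts with exact diffusion in the same two-agent setting, which is stable for $0<\mu\sigma^2<2$; since $1+a<2$, exact diffusion has a larger stability range. *)

theory Defs
  imports "HOL-Analysis.Analysis"
begin

definition combA :: "real \<Rightarrow> real^2^2" where
  "combA a = (\<chi> k l. if k = l then a else 1 - a)"

definition Pmat :: "real^2^2" where
  "Pmat = (1/2::real) *\<^sub>R mat 1"

definition Abar :: "real \<Rightarrow> real^2^2" where
  "Abar a = (1/2::real) *\<^sub>R (mat 1 + combA a)"

text \<open>Action of the Kronecker product B \<otimes> I_M on a stacked vector of two M-blocks.\<close>
definition kapp :: "real^2^2 \<Rightarrow> real^'m^2 \<Rightarrow> real^'m^2" where
  "kapp B X = (\<chi> k. \<Sum>j\<in>UNIV. B $ k $ j *\<^sub>R X $ j)"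

definition Qe_step :: "real \<Rightarrow> real \<Rightarrow> real \<Rightarrow> real^2^2 \<Rightarrow>
    ((real^'m^2) \<times> (real^'m^2)) \<Rightarrow> ((real^'m^2) \<times> (real^'m^2))" where
  "Qe_step a \<mu> \<sigma> V z =
     (let B = Abar a - (\<mu> * \<sigma>^2) *\<^sub>R mat 1
      in (kapp B (fst z) + kapp ((-2::real) *\<^sub>R V) (snd z),
          kapp (V ** B) (fst z) + kapp (Abar a) (snd z)))"

definition extra_err :: "real \<Rightarrow> real \<Rightarrow> real \<Rightarrow> real^2^2 \<Rightarrow>
    ((real^'m^2) \<times> (real^'m^2)) \<Rightarrow> nat \<Rightarrow> ((real^'m^2) \<times> (real^'m^2))" where
  "extra_err a \<mu> \<sigma> V z0 i = (Qe_step a \<mu> \<sigma> V ^^ i) z0"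

end

theory Submission imports Defs begin



lemma Vfacts:
  fixes a :: real and U \<Sigma> V :: "real^2^2"
  assumes a1: "a < 1" and "orthogonal_matrix U"
    and "\<forall>i j. i \<noteq> j \<longrightarrow> \<Sigma> $ i $ j = 0"
    and "\<forall>i. \<Sigma> $ i $ i \<ge> 0"
    and M: "(1/2::real) *\<^sub>R (Pmat - combA a ** Pmat) = U ** \<Sigma> ** transpose U"
    and Vd: "V = U ** (\<chi> i j. if i = j then sqrt (\<Sigma> $ i $ i) else 0) ** transpose U"
  shows "V$1$2 = - V$1$1 \<and> V$2$1 = - V$1$1 \<and> V$2$2 = V$1$1 \<and> (V$1$1)^2 = (1-a)/8"
proof -
  define D :: "real^2^2" where "D = (\<chi> i j. if i = j then sqrt (\<Sigma> $ i $ i) else 0)"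
  have DD: "D ** D = \<Sigma>"
    using assms(3,4) unfolding D_def
    by (auto simp: vec_eq_iff matrix_matrix_mult_def sum_2 forall_2)
  have Dt: "transpose D = D" unfolding D_def by (auto simp: vec_eq_iff transpose_def)
  have UtU: "transpose U ** U = mat 1" using assms(2) by (simp add: orthogonal_matrix_def)
  have Vt: "transpose V = V" unfolding Vd D_def[symmetric]
    by (simp add: matrix_transpose_mul Dt matrix_mul_assoc)
  have "V ** V = U ** D ** (transpose U ** U) ** D ** transpose U"
    unfolding Vd D_def[symmetric] by (simp add: matrix_mul_assoc)
  also have "\<dots> = U ** (D ** D) ** transpose U" using UtU by (simp add: matrix_mul_assoc)
  also have "\<dots> = U ** \<Sigma> ** transpose U" using DD by simp
  finally have VV: "V ** V = (1/2::real) *\<^sub>R (Pmat - combA a ** Pmat)" using M by simp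
  have e11: "(V$1$1)^2 + (V$1$2)^2 = (1-a)/4"
    using arg_cong[OF VV, of "\<lambda>X. X$1$1"] Vt
    by (simp add: matrix_matrix_mult_def sum_2 Pmat_def combA_def vec_eq_iff transpose_def power2_eq_square mat_def algebra_simps)
  have e22: "(V$2$2)^2 + (V$1$2)^2 = (1-a)/4"
    using arg_cong[OF VV, of "\<lambda>X. X$2$2"] Vt
    by (simp add: matrix_matrix_mult_def sum_2 Pmat_def combA_def vec_eq_iff transpose_def power2_eq_square mat_def algebra_simps)
  have e12: "V$1$2 * (V$1$1 + V$2$2) = -(1-a)/4"
    using arg_cong[OF VV, of "\<lambda>X. X$1$2"] Vt
    by (simp add: matrix_matrix_mult_def sum_2 Pmat_def combA_def vec_eq_iff transpose_def power2_eq_square mat_def algebra_simps) (simp add: field_simps)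
  have s21: "V$2$1 = V$1$2" using arg_cong[OF Vt, of "\<lambda>X. X$1$2"] by (simp add: transpose_def)
  define p where "p = V$1$1"
  define q where "q = V$1$2"
  define r where "r = V$2$2"
  have E1: "p^2 + q^2 = (1-a)/4" "r^2+q^2 = (1-a)/4" "q*(p+r) = -(1-a)/4"
    using e11 e22 e12 by (simp_all add: p_def q_def r_def)
  have pr: "p + r \<noteq> 0" using E1(3) a1 by auto
  have "(p-r)*(p+r) = 0" using E1 by (simp add: algebra_simps power2_eq_square)
  hence "p = r" using pr by simp
  hence "(p+q)^2 = 0" using E1 by (simp add: algebra_simps power2_eq_square)
  hence "q = -p" by simp
  with \<open>p = r\<close> E1 have "p^2 = (1-a)/8" by (simp add: power2_eq_square)
  thus ?thesis using \<open>q = -p\<close> \<open>p = r\<close> s21 by (simp add: p_def q_def r_def)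
qed

definition ux :: "real^'m \<Rightarrow> real^'m^2" where "ux x = (\<chi> k. if k = 1 then x else -x)"

lemma kapp_ux:
  assumes "B$2$1 = B$2$2 - B$1$1 + B$1$2" and "B$1$1 - B$1$2 = d"
  shows "kapp B (c *\<^sub>R ux x) = (c * d) *\<^sub>R ux x"
  unfolding assms(2)[symmetric] kapp_def ux_def vec_eq_iff forall_2
  by (simp add: sum_2 assms(1) algebra_simps)

lemma kapp_mult: "kapp (A ** B) X = kapp A (kapp B X)"
  unfolding kapp_def
  by (simp add: vec_eq_iff sum_2 matrix_matrix_mult_def algebra_simps scaleR_add_right)

lemma Qe_ux:
  assumes "V$1$2 = - V$1$1" "V$2$1 = - V$1$1" "V$2$2 = V$1$1"
  shows "Qe_step a \<mu> \<sigma> V (\<alpha> *\<^sub>R ux x, \<beta> *\<^sub>R ux x) =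
    (((a - \<mu>*\<sigma>^2)*\<alpha> - 4*V$1$1*\<beta>) *\<^sub>R ux x,
     (2*V$1$1*(a - \<mu>*\<sigma>^2)*\<alpha> + a*\<beta>) *\<^sub>R ux x)"
proof -
  define B where "B = Abar a - (\<mu> * \<sigma>^2) *\<^sub>R (mat 1 :: real^2^2)"
  have B: "kapp B (c *\<^sub>R ux x) = (c * (a - \<mu>*\<sigma>^2)) *\<^sub>R ux x" for c
    by (rule kapp_ux) (auto simp: B_def Abar_def combA_def mat_def field_simps)
  have A: "kapp (Abar a) (c *\<^sub>R ux x) = (c * a) *\<^sub>R ux x" for c
    by (rule kapp_ux) (auto simp: Abar_def combA_def mat_def field_simps)
  have V2: "kapp ((-2::real) *\<^sub>R V) (c *\<^sub>R ux x) = (c * (-4*V$1$1)) *\<^sub>R ux x" for c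
    by (rule kapp_ux) (auto simp: assms algebra_simps)
  have V1: "kapp V (c *\<^sub>R ux x) = (c * (2*V$1$1)) *\<^sub>R ux x" for c
    by (rule kapp_ux) (auto simp: assms algebra_simps)
  have "Qe_step a \<mu> \<sigma> V (\<alpha> *\<^sub>R ux x, \<beta> *\<^sub>R ux x) =
    ((\<alpha> * (a - \<mu>*\<sigma>^2)) *\<^sub>R ux x + (\<beta> * (-4*V$1$1)) *\<^sub>R ux x,
     ((\<alpha> * (a - \<mu>*\<sigma>^2)) * (2*V$1$1)) *\<^sub>R ux x + (\<beta> * a) *\<^sub>R ux x)"
    unfolding Qe_step_def Let_def B_def[symmetric] kapp_mult fst_conv snd_conv B A V2 V1 ..
  also have "\<dots> = (((a - \<mu>*\<sigma>^2)*\<alpha> - 4*V$1$1*\<beta>) *\<^sub>R ux x,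
     (2*V$1$1*(a - \<mu>*\<sigma>^2)*\<alpha> + a*\<beta>) *\<^sub>R ux x)"
    unfolding scaleR_add_left[symmetric] by (simp add: algebra_simps)
  finally show ?thesis .
qed

lemma root_ex:
  fixes a m :: real
  assumes "0 < a" "a < 1" "m \<ge> a + 1"
  shows "\<exists>l. l < -1 \<and> l^2 - (2*a-m)*l + (a-m) = 0"
proof -
  define D where "D = (2*a-m)^2 - 4*(a-m)"
  have D: "D = (2*a-m+2)^2 + (8*m - 12*a - 4)" unfolding D_def by (simp add: power2_eq_square algebra_simps)
  have pos: "8*m - 12*a - 4 > 0" using assms by linarith
  have D0: "D > 0" using D pos by (metis add_nonneg_pos zero_le_power2)
  define l where "l = ((2*a-m) - sqrt D)/2"
  have sq: "sqrt D ^2 = D" using D0 by simp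
  have "2*a-m+2 < sqrt D"
  proof (cases "2*a-m+2 < 0")
    case True then show ?thesis using D0 by (meson less_le_trans real_sqrt_ge_zero less_imp_le not_le)
  next
    case False
    have "(2*a-m+2)^2 < (sqrt D)^2" using sq D pos by simp
    thus ?thesis using power2_less_imp_less[of "2*a-m+2" "sqrt D"] D0 by simp
  qed
  hence "l < -1" unfolding l_def by simp
  moreover have "l^2 - (2*a-m)*l + (a-m) = 0"
  proof -
    have "l^2 - (2*a-m)*l + (a-m) = ((2*a-m)^2 - 4*(a-m) - (sqrt D)^2)/ -4"
      unfolding l_def by (simp add: power2_eq_square field_simps)
    thus ?thesis using sq unfolding D_def by simp
  qed
  ultimately show ?thesis by blast
qed
theorem lemma7:
  fixes a \<mu> \<sigma> :: real and U \<Sigma> V :: "real^2^2"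
  assumes "0 < a" and "a < 1"
    and "orthogonal_matrix U"
    and "\<forall>i j. i \<noteq> j \<longrightarrow> \<Sigma> $ i $ j = 0"
    and "\<forall>i. \<Sigma> $ i $ i \<ge> 0"
    and "(1/2::real) *\<^sub>R (Pmat - combA a ** Pmat) = U ** \<Sigma> ** transpose U"
    and "V = U ** (\<chi> i j. if i = j then sqrt (\<Sigma> $ i $ i) else 0) ** transpose U"
    and "\<mu> * \<sigma>^2 \<ge> a + 1"
  shows "\<exists>z0 :: (real^'m^2) \<times> (real^'m^2). snd z0 \<in> range (kapp V) \<and>
           filterlim (\<lambda>i. norm (extra_err a \<mu> \<sigma> V z0 i)) at_top sequentially"
proof -
  define p where "p = V$1$1"
  define m where "m = \<mu> * \<sigma>^2"
  have VF: "V$1$2 = - p" "V$2$1 = - p" "V$2$2 = p" "p^2 = (1-a)/8"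
    using Vfacts[OF assms(2,3,4,5,6,7)] unfolding p_def by auto
  obtain l where l: "l < -1" "l^2 - (2*a-m)*l + (a-m) = 0"
    using root_ex[OF assms(1,2), of m] assms(8) unfolding m_def by auto
  have la: "l - a \<noteq> 0" using l assms(1) by linarith
  define b where "b = 2*p*(a-m)/(l-a)"
  have h1: "(a-m) - 4*p*b = l"
  proof -
    have "((a-m) - 4*p*b - l) * (l-a) = (a-m)*(l-a) - 8*p^2*(a-m) - l*(l-a)"
      unfolding b_def using la by (simp add: field_simps power2_eq_square)
    also have "\<dots> = (a-m)*(l-a) - (1-a)*(a-m) - l*(l-a)"
      using VF(4) by simp
    also have "\<dots> = - (l^2 - (2*a-m)*l + (a-m))" by (simp add: algebra_simps power2_eq_square)
    also have "\<dots> = 0" using l(2) by simp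
    finally show ?thesis using la by simp
  qed
  have h2: "2*p*(a-m) + a*b = l*b" unfolding b_def using la by (simp add: field_simps)
  have step: "Qe_step a \<mu> \<sigma> V (c *\<^sub>R ux y, (c*b) *\<^sub>R ux y) = ((l*c) *\<^sub>R ux y, (l*c*b) *\<^sub>R ux y)"
    for c and y :: "real^'m"
  proof -
    have "Qe_step a \<mu> \<sigma> V (c *\<^sub>R ux y, (c*b) *\<^sub>R ux y) =
      (((a - m)*c - 4*p*(c*b)) *\<^sub>R ux y, (2*p*(a - m)*c + a*(c*b)) *\<^sub>R ux y)"
      unfolding p_def m_def by (rule Qe_ux[OF VF(1,2,3)[unfolded p_def]])
    also have "(a - m)*c - 4*p*(c*b) = l*c" using h1 by (simp add: algebra_simps)
    also have "2*p*(a - m)*c + a*(c*b) = l*c*b" using arg_cong[OF h2, of "\<lambda>t. c*t"] by (simp add: algebra_simps)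
    finally show ?thesis .
  qed
  define x :: "real^'m" where "x = (\<chi> j. 1)"
  define z0 :: "(real^'m^2) \<times> (real^'m^2)" where "z0 = (ux x, b *\<^sub>R ux x)"
  have iter: "extra_err a \<mu> \<sigma> V z0 i = ((l^i) *\<^sub>R ux x, (l^i*b) *\<^sub>R ux x)" for i
  proof (induction i)
    case 0 then show ?case by (simp add: extra_err_def z0_def)
  next
    case (Suc i)
    have "extra_err a \<mu> \<sigma> V z0 (Suc i) = Qe_step a \<mu> \<sigma> V (extra_err a \<mu> \<sigma> V z0 i)"
      by (simp add: extra_err_def)
    also have "\<dots> = ((l^Suc i) *\<^sub>R ux x, (l^Suc i*b) *\<^sub>R ux x)"
      unfolding Suc step by simp
    finally show ?case .
  qed
  have ux0: "ux x \<noteq> 0"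
  proof
    assume "ux x = 0"
    hence "ux x $ 1 $ undefined = 0" by simp
    thus False by (simp add: ux_def x_def)
  qed
  have p0: "p \<noteq> 0" using VF(4) assms(2) by auto
  have rng: "snd z0 \<in> range (kapp V)"
  proof
    show "snd z0 = kapp V ((b/(2*p)) *\<^sub>R ux x)"
      by (subst kapp_ux[where d="2*p"]) (use VF p0 in \<open>auto simp: z0_def p_def\<close>)
  qed simp
  have lim1: "LIM i sequentially. norm (l^i) :> at_top"
    by (rule filterlim_at_infinity_imp_norm_at_top, rule filterlim_realpow_sequentially_gt1) (use l in simp)
  have lim2: "LIM i sequentially. norm (ux x) * norm (l^i) :> at_top"
    by (rule filterlim_tendsto_pos_mult_at_top[OF tendsto_const _ lim1]) (use ux0 in simp)
  have "LIM i sequentially. norm (extra_err a \<mu> \<sigma> V z0 i) :> at_top"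
  proof (rule filterlim_at_top_mono[OF lim2], rule always_eventually, rule allI)
    fix i
    have "norm (ux x) * norm (l^i) = norm ((l^i) *\<^sub>R ux x)" by simp
    also have "\<dots> \<le> norm (extra_err a \<mu> \<sigma> V z0 i)" unfolding iter by (rule norm_fst_le)
    finally show "norm (ux x) * norm (l^i) \<le> norm (extra_err a \<mu> \<sigma> V z0 i)" .
  qed
  with rng show ?thesis by blast
qed

end
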